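(* Let $C$ be a normal closed cone with nonempty interior in a real Banach space. Let $f:\operatorname{int} C \to \operatorname{int} C$ be type K order-preserving and homogeneous, and let $g(x) = f(x)/\|f(x)\|$ for $x \in \operatorname{int} C$. Suppose $f$ has an eigenvector in $\operatorname{int} C$. Then for every $x \in \operatorname{int} C$ such that the orbit $\mathcal{O}(x,g) = \{g^k(x) : k\in\mathbb{N}\}$ has compact closure, the sequence $g^k(x)$ converges to an eigenvector of $f$.
   Context: A closed cone is a closed convex set $C \subset X$ with $\lambda C \subset C$ for $\lambda \ge 0$ and $C \cap (-C) = \{0\}$; $x\le y$ means $y-x\in C$. $C$ is normal if there is $\kappa > 0$ with $\|x\| \le \kappa \|y\|$ whenever $0 \le x \le y$. $f$ is homogeneous if $f(tx) = t f(x)$ for all $t>0$; it is type K order-preserving if for any $x \le y$ in its domain there is $\epsilon > 0$ with $f(y) - f(x) \ge \epsilon(y - x)$. *)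

theory Defs
  imports "HOL-Analysis.Analysis"
begin

definition closed_cone :: "'a::real_normed_vector set \<Rightarrow> bool" where
  "closed_cone C \<longleftrightarrow> closed C \<and> convex C \<and> (\<forall>t::real. \<forall>x\<in>C. t \<ge> 0 \<longrightarrow> t *\<^sub>R x \<in> C)
     \<and> C \<inter> uminus ` C = {0}"

definition cone_le :: "'a::real_normed_vector set \<Rightarrow> 'a \<Rightarrow> 'a \<Rightarrow> bool" where
  "cone_le C x y \<longleftrightarrow> y - x \<in> C"

definition normal_cone :: "'a::real_normed_vector set \<Rightarrow> bool" where
  "normal_cone C \<longleftrightarrow> (\<exists>\<kappa>>0. \<forall>x y. cone_le C 0 x \<and> cone_le C x y \<longrightarrow> norm x \<le> \<kappa> * norm y)"

definition homogeneous_on :: "'a::real_normed_vector set \<Rightarrow> ('a \<Rightarrow> 'a) \<Rightarrow> bool" where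
  "homogeneous_on D f \<longleftrightarrow> (\<forall>x\<in>D. \<forall>t::real. t > 0 \<longrightarrow> t *\<^sub>R x \<in> D \<longrightarrow> f (t *\<^sub>R x) = t *\<^sub>R f x)"

definition typeK_order_preserving_on ::
  "'a::real_normed_vector set \<Rightarrow> 'a set \<Rightarrow> ('a \<Rightarrow> 'a) \<Rightarrow> bool" where
  "typeK_order_preserving_on C D f \<longleftrightarrow>
     (\<forall>x\<in>D. \<forall>y\<in>D. cone_le C x y \<longrightarrow> (\<exists>\<epsilon>>0. cone_le C (\<epsilon> *\<^sub>R (y - x)) (f y - f x)))"

definition eigenvector_on :: "'a::real_normed_vector set \<Rightarrow> ('a \<Rightarrow> 'a) \<Rightarrow> 'a \<Rightarrow> bool" where
  "eigenvector_on D f v \<longleftrightarrow> v \<in> D \<and> v \<noteq> 0 \<and> (\<exists>c::real. f v = c *\<^sub>R v)"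

end

theory Submission
  imports Defs
begin

section \<open>Basic cone facts\<close>

lemma cc_closed: "closed_cone C \<Longrightarrow> closed C"
  by (simp add: closed_cone_def)

lemma cc_scale: "closed_cone C \<Longrightarrow> a \<in> C \<Longrightarrow> (t::real) \<ge> 0 \<Longrightarrow> t *\<^sub>R a \<in> C"
  unfolding closed_cone_def by blast

lemma cc_add:
  assumes "closed_cone C" "a \<in> C" "b \<in> C"
  shows "a + b \<in> C"
proof -
  have cv: "convex C" using assms(1) by (simp add: closed_cone_def)
  have "(1/2::real) *\<^sub>R a + (1/2::real) *\<^sub>R b \<in> C"
    using convexD[OF cv assms(2,3), of "1/2" "1/2"] by simp
  hence "(2::real) *\<^sub>R ((1/2::real) *\<^sub>R a + (1/2::real) *\<^sub>R b) \<in> C"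
    using cc_scale[OF assms(1)] by simp
  thus ?thesis by (simp add: scaleR_add_right)
qed

lemma cc_zero: "closed_cone C \<Longrightarrow> a \<in> C \<Longrightarrow> 0 \<in> C"
  using cc_scale[of C a 0] by simp

lemma cc_pointed:
  assumes "closed_cone C" "a \<in> C" "-a \<in> C"
  shows "a = 0"
proof -
  have "a \<in> uminus ` C" using image_eqI[of a uminus "-a" C] assms(3) by simp
  hence "a \<in> C \<inter> uminus ` C" using assms(2) by blast
  moreover have "C \<inter> uminus ` C = {0}" using assms(1) by (simp add: closed_cone_def)
  ultimately show ?thesis by blast
qed

lemma cc_int_scale:
  assumes cc: "closed_cone C" and p: "p \<in> interior C" and t: "t > 0"
  shows "t *\<^sub>R p \<in> interior C"
proof -
  obtain e where e: "e > 0" "ball p e \<subseteq> C" using p mem_interior by blast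
  have "ball (t *\<^sub>R p) (t*e) \<subseteq> C"
  proof
    fix z assume "z \<in> ball (t *\<^sub>R p) (t*e)"
    hence "norm (t *\<^sub>R p - z) < t*e" by (simp add: dist_norm)
    moreover have "t *\<^sub>R p - z = t *\<^sub>R (p - (1/t) *\<^sub>R z)" using t by (simp add: algebra_simps)
    ultimately have "t * norm (p - (1/t) *\<^sub>R z) < t * e" using t by simp
    hence "norm (p - (1/t) *\<^sub>R z) < e" using t by simp
    hence "(1/t) *\<^sub>R z \<in> C" using e by (auto simp: dist_norm)
    hence "t *\<^sub>R ((1/t) *\<^sub>R z) \<in> C" by (rule cc_scale[OF cc]) (use t in auto)
    thus "z \<in> C" using t by simp
  qed
  thus ?thesis using mem_interior e t by (metis mult_pos_pos)
qed

lemma cc_int_add: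
  assumes cc: "closed_cone C" and p: "p \<in> interior C" and q: "q \<in> C"
  shows "p + q \<in> interior C"
proof -
  obtain e where e: "e > 0" "ball p e \<subseteq> C" using p mem_interior by blast
  have "ball (p + q) e \<subseteq> C"
  proof
    fix z assume "z \<in> ball (p + q) e"
    hence "dist p (z - q) < e" by (simp add: dist_norm algebra_simps)
    hence "z - q \<in> C" using e by auto
    hence "(z - q) + q \<in> C" using cc_add[OF cc _ q] by blast
    thus "z \<in> C" by simp
  qed
  thus ?thesis using mem_interior e by blast
qed

lemma cc_int_ball:
  assumes cc: "closed_cone C" and p: "p \<in> interior C"
  shows "\<exists>\<rho>>0. \<forall>h. h + (norm h / \<rho>) *\<^sub>R p \<in> C"
proof -
  obtain e where e: "e > 0" "ball p e \<subseteq> C" using p mem_interior by blast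
  have pC: "p \<in> C" using p interior_subset by blast
  have "\<forall>h. h + (norm h / (e/2)) *\<^sub>R p \<in> C"
  proof
    fix h :: 'a
    show "h + (norm h / (e/2)) *\<^sub>R p \<in> C"
    proof (cases "h = 0")
      case True thus ?thesis using cc_zero[OF cc pC] by simp
    next
      case False
      hence nh: "norm h > 0" by simp
      have "dist p (p + ((e/2) / norm h) *\<^sub>R h) = norm (((e/2) / norm h) *\<^sub>R h)"
        by (simp add: dist_norm)
      also have "... = e/2" using nh e by simp
      finally have "dist p (p + ((e/2) / norm h) *\<^sub>R h) = e/2" .
      hence "p + ((e/2) / norm h) *\<^sub>R h \<in> C" using e by auto
      hence "(norm h / (e/2)) *\<^sub>R (p + ((e/2) / norm h) *\<^sub>R h) \<in> C"
        using cc_scale[OF cc] e nh by simp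
      moreover have "(norm h / (e/2)) *\<^sub>R (p + ((e/2) / norm h) *\<^sub>R h) = h + (norm h / (e/2)) *\<^sub>R p"
        using nh e by (simp add: scaleR_add_right)
      ultimately show ?thesis by simp
    qed
  qed
  thus ?thesis using e by (metis half_gt_zero)
qed

lemma cc_zero_notin:
  fixes C :: "'a::real_normed_vector set" and v :: 'a
  assumes cc: "closed_cone C" and v: "v \<noteq> 0"
  shows "0 \<notin> interior C"
proof
  assume "0 \<in> interior C"
  then obtain e where e: "e > 0" "ball 0 e \<subseteq> C" using mem_interior by blast
  define s where "s = e / (2 * norm v)"
  have s: "s > 0" using e v by (simp add: s_def)
  have ns: "norm (s *\<^sub>R v) = e/2" using v e by (simp add: s_def)
  hence "s *\<^sub>R v \<in> C" "- (s *\<^sub>R v) \<in> C" using e by auto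
  hence "s *\<^sub>R v = 0" using cc_pointed[OF cc] by blast
  thus False using s v by simp
qed

definition lo :: "'a::real_normed_vector set \<Rightarrow> 'a \<Rightarrow> 'a \<Rightarrow> real" where
  "lo C a b = Sup {t. a - t *\<^sub>R b \<in> C}"

locale cone_setting =
  fixes C :: "'a::banach set" and F :: "'a \<Rightarrow> 'a" and \<kappa> :: real and v :: 'a
  assumes cc: "closed_cone C"
    and kpos: "\<kappa> > 0"
    and normal: "\<And>x y. x \<in> C \<Longrightarrow> y - x \<in> C \<Longrightarrow> norm x \<le> \<kappa> * norm y"
    and Fmap: "\<And>x. x \<in> interior C \<Longrightarrow> F x \<in> interior C"
    and FK: "\<And>x y. x \<in> interior C \<Longrightarrow> y \<in> interior C \<Longrightarrow> y - x \<in> C \<Longrightarrow>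
               \<exists>\<epsilon>>0. F y - F x - \<epsilon> *\<^sub>R (y - x) \<in> C"
    and Fhom: "\<And>x t. x \<in> interior C \<Longrightarrow> t > 0 \<Longrightarrow> F (t *\<^sub>R x) = t *\<^sub>R F x"
    and vK: "v \<in> interior C" and vnz: "v \<noteq> 0" and Fv: "F v = v"
begin

lemma KC: "p \<in> interior C \<Longrightarrow> p \<in> C"
  using interior_subset by blast

lemma addC: "a \<in> C \<Longrightarrow> b \<in> C \<Longrightarrow> a + b \<in> C"
  using cc_add[OF cc] .

lemma scaleC: "a \<in> C \<Longrightarrow> t \<ge> 0 \<Longrightarrow> t *\<^sub>R a \<in> C"
  using cc_scale[OF cc] .

lemma zeroC: "0 \<in> C"
  using cc_zero[OF cc KC[OF vK]] .

lemma pointed: "a \<in> C \<Longrightarrow> -a \<in> C \<Longrightarrow> a = 0"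
  using cc_pointed[OF cc] .

lemma Knz: "p \<in> interior C \<Longrightarrow> p \<noteq> 0"
  using cc_zero_notin[OF cc vnz] by blast

lemma Kscale: "p \<in> interior C \<Longrightarrow> t > 0 \<Longrightarrow> t *\<^sub>R p \<in> interior C"
  using cc_int_scale[OF cc] .

lemma Kadd: "p \<in> interior C \<Longrightarrow> q \<in> C \<Longrightarrow> p + q \<in> interior C"
  using cc_int_add[OF cc] .

lemma closedC: "closed C"
  using cc_closed[OF cc] .

lemma Fmono:
  assumes "x \<in> interior C" "y \<in> interior C" "y - x \<in> C"
  shows "F y - F x \<in> C"
proof -
  obtain \<epsilon> where e: "\<epsilon> > 0" "F y - F x - \<epsilon> *\<^sub>R (y - x) \<in> C" using FK[OF assms] by blast
  moreover have "\<epsilon> *\<^sub>R (y - x) \<in> C" using scaleC assms(3) e(1) by simp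
  ultimately have "(F y - F x - \<epsilon> *\<^sub>R (y - x)) + \<epsilon> *\<^sub>R (y - x) \<in> C" using addC by blast
  thus ?thesis by simp
qed

lemma scal_le:
  assumes "b \<in> interior C" "(s - t) *\<^sub>R b \<in> C"
  shows "t \<le> s"
proof (rule ccontr)
  assume nt: "\<not> t \<le> s"
  hence "(t - s) *\<^sub>R b \<in> C" using scaleC KC[OF assms(1)] by simp
  hence "- ((s - t) *\<^sub>R b) \<in> C" by (metis minus_diff_eq scaleR_minus_left)
  hence "(s - t) *\<^sub>R b = 0" using pointed assms(2) by blast
  thus False using nt Knz[OF assms(1)] by simp
qed

lemma lower_exists:
  assumes a: "a \<in> interior C" and b: "b \<in> interior C"
  shows "\<exists>t>0. a - t *\<^sub>R b \<in> C"
proof -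
  obtain \<rho> where r: "\<rho> > 0" "\<forall>h. h + (norm h / \<rho>) *\<^sub>R a \<in> C" using cc_int_ball[OF cc a] by blast
  have nb: "norm b > 0" using Knz[OF b] by simp
  have "(- ((\<rho> / norm b) *\<^sub>R b)) + (norm (- ((\<rho> / norm b) *\<^sub>R b)) / \<rho>) *\<^sub>R a \<in> C" using r by blast
  moreover have "norm (- ((\<rho> / norm b) *\<^sub>R b)) = \<rho>" using nb r by simp
  ultimately have "a - (\<rho> / norm b) *\<^sub>R b \<in> C" using r by (simp add: algebra_simps)
  moreover have "\<rho> / norm b > 0" using nb r by simp
  ultimately show ?thesis by blast
qed

lemma lo_ex:
  assumes a: "a \<in> interior C" and b: "b \<in> interior C"
  shows "a - lo C a b *\<^sub>R b \<in> C \<and> (\<forall>t. a - t *\<^sub>R b \<in> C \<longrightarrow> t \<le> lo C a b) \<and> lo C a b > 0"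
proof -
  define S where "S = {t. a - t *\<^sub>R b \<in> C}"
  obtain t0 where t0: "t0 > 0" "a - t0 *\<^sub>R b \<in> C" using lower_exists[OF a b] by blast
  obtain s0 where s0: "s0 > 0" "b - s0 *\<^sub>R a \<in> C" using lower_exists[OF b a] by blast
  have bd: "t \<le> 1/s0" if "t \<in> S" for t
  proof -
    have "(1/s0) *\<^sub>R (b - s0 *\<^sub>R a) + (a - t *\<^sub>R b) \<in> C"
      using that s0 scaleC addC by (simp add: S_def)
    moreover have "(1/s0) *\<^sub>R (b - s0 *\<^sub>R a) + (a - t *\<^sub>R b) = (1/s0 - t) *\<^sub>R b"
      using s0 by (simp add: algebra_simps)
    ultimately show ?thesis using scal_le[OF b] by simp
  qed
  have ne: "S \<noteq> {}" using t0 by (auto simp: S_def)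
  have ba: "bdd_above S" using bd by (intro bdd_aboveI) blast
  have cl: "closed S"
  proof -
    have "S = (\<lambda>t. a - t *\<^sub>R b) -` C" by (auto simp: S_def)
    moreover have "continuous_on UNIV (\<lambda>t::real. a - t *\<^sub>R b)" by (intro continuous_intros)
    ultimately show ?thesis using closed_vimage closedC by metis
  qed
  have "Sup S \<in> S" using closed_contains_Sup[OF ne ba cl] .
  moreover have "\<forall>t. t \<in> S \<longrightarrow> t \<le> Sup S" using cSup_upper[OF _ ba] by blast
  moreover have "t0 \<le> Sup S" using cSup_upper[OF _ ba] t0 by (auto simp: S_def)
  ultimately show ?thesis using t0 by (auto simp: S_def lo_def)
qed

lemma lo_ge: "a \<in> interior C \<Longrightarrow> b \<in> interior C \<Longrightarrow> a - lo C a b *\<^sub>R b \<in> C"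
  using lo_ex by blast

lemma lo_le: "a \<in> interior C \<Longrightarrow> b \<in> interior C \<Longrightarrow> a - t *\<^sub>R b \<in> C \<Longrightarrow> t \<le> lo C a b"
  using lo_ex by blast

lemma lo_pos: "a \<in> interior C \<Longrightarrow> b \<in> interior C \<Longrightarrow> lo C a b > 0"
  using lo_ex by blast

lemma lo_self:
  assumes a: "a \<in> interior C"
  shows "lo C a a = 1"
proof (rule antisym)
  have "a - lo C a a *\<^sub>R a \<in> C" using lo_ge[OF a a] .
  hence "(1 - lo C a a) *\<^sub>R a \<in> C" by (simp add: algebra_simps)
  thus "lo C a a \<le> 1" using scal_le[OF a] by simp
  show "1 \<le> lo C a a" using lo_le[OF a a, of 1] zeroC by simp
qed

lemma lo_mono_F:
  assumes a: "a \<in> interior C" and b: "b \<in> interior C"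
  shows "lo C a b \<le> lo C (F a) (F b)"
proof -
  let ?s = "lo C a b"
  have s: "?s > 0" using lo_pos[OF a b] .
  have sb: "?s *\<^sub>R b \<in> interior C" using Kscale[OF b s] .
  have "F a - F (?s *\<^sub>R b) \<in> C" using Fmono[OF sb a lo_ge[OF a b]] .
  hence "F a - ?s *\<^sub>R F b \<in> C" using Fhom[OF b s] by simp
  thus ?thesis using lo_le[OF Fmap[OF a] Fmap[OF b]] by blast
qed

lemma scale_out:
  assumes P: "P > 0" and h: "P *\<^sub>R a - Q *\<^sub>R b \<in> C"
  shows "a - (Q/P) *\<^sub>R b \<in> C"
proof -
  have "(1/P) *\<^sub>R (P *\<^sub>R a - Q *\<^sub>R b) \<in> C" using scaleC[OF h] P by simp
  moreover have "(1/P) *\<^sub>R (P *\<^sub>R a - Q *\<^sub>R b) = a - (Q/P) *\<^sub>R b"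
    using P by (simp add: scaleR_right_diff_distrib)
  ultimately show ?thesis by simp
qed

end

context cone_setting
begin

lemma near:
  assumes a: "a \<in> interior C" and z: "z \<longlonglongrightarrow> a"
  shows "\<exists>\<rho>>0. (\<forall>i. z i - (1 - norm (z i - a)/\<rho>) *\<^sub>R a \<in> C \<and> (1 + norm (z i - a)/\<rho>) *\<^sub>R a - z i \<in> C)
              \<and> (\<lambda>i. norm (z i - a)/\<rho>) \<longlonglongrightarrow> 0"
proof -
  obtain \<rho> where r: "\<rho> > 0" "\<forall>h. h + (norm h / \<rho>) *\<^sub>R a \<in> C" using cc_int_ball[OF cc a] by blast
  have "\<forall>i. z i - (1 - norm (z i - a)/\<rho>) *\<^sub>R a \<in> C \<and> (1 + norm (z i - a)/\<rho>) *\<^sub>R a - z i \<in> C"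
  proof
    fix i
    have h1: "(z i - a) + (norm (z i - a) / \<rho>) *\<^sub>R a \<in> C" using r by blast
    have h2: "(a - z i) + (norm (a - z i) / \<rho>) *\<^sub>R a \<in> C" using r by blast
    have e1: "(z i - a) + (norm (z i - a) / \<rho>) *\<^sub>R a = z i - (1 - norm (z i - a)/\<rho>) *\<^sub>R a"
      by (simp add: algebra_simps)
    have e2: "(a - z i) + (norm (a - z i) / \<rho>) *\<^sub>R a = (1 + norm (z i - a)/\<rho>) *\<^sub>R a - z i"
      by (simp add: algebra_simps norm_minus_commute)
    show "z i - (1 - norm (z i - a)/\<rho>) *\<^sub>R a \<in> C \<and> (1 + norm (z i - a)/\<rho>) *\<^sub>R a - z i \<in> C"
      using h1 h2 e1 e2 by simp
  qed
  moreover have "(\<lambda>i. norm (z i - a)/\<rho>) \<longlonglongrightarrow> 0"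
    using tendsto_divide_zero[OF tendsto_norm_zero[OF LIM_zero[OF z]]] .
  ultimately show ?thesis using r by blast
qed

lemma squeeze:
  assumes p: "p \<longlonglongrightarrow> 1" and q: "q \<longlonglongrightarrow> 1"
    and ev: "eventually (\<lambda>i. z i - p i *\<^sub>R a \<in> C \<and> q i *\<^sub>R a - z i \<in> C) sequentially"
  shows "z \<longlonglongrightarrow> a"
proof -
  let ?G = "\<lambda>i. \<kappa> * \<bar>q i - p i\<bar> * norm a + \<bar>p i - 1\<bar> * norm a"
  have G: "?G \<longlonglongrightarrow> \<kappa> * \<bar>1 - 1\<bar> * norm a + \<bar>1 - 1\<bar> * norm a"
    by (intro tendsto_intros p q)
  hence G0: "?G \<longlonglongrightarrow> 0" by simp
  have evn: "eventually (\<lambda>i. norm (z i - a) \<le> ?G i) sequentially"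
    using ev
  proof (rule eventually_mono)
    fix i assume h: "z i - p i *\<^sub>R a \<in> C \<and> q i *\<^sub>R a - z i \<in> C"
    have "(q i - p i) *\<^sub>R a - (z i - p i *\<^sub>R a) = q i *\<^sub>R a - z i" by (simp add: algebra_simps)
    hence "norm (z i - p i *\<^sub>R a) \<le> \<kappa> * norm ((q i - p i) *\<^sub>R a)" using normal h by metis
    hence n1: "norm (z i - p i *\<^sub>R a) \<le> \<kappa> * \<bar>q i - p i\<bar> * norm a" by simp
    have "z i - a = (z i - p i *\<^sub>R a) + (p i - 1) *\<^sub>R a" by (simp add: algebra_simps)
    hence "norm (z i - a) \<le> norm (z i - p i *\<^sub>R a) + norm ((p i - 1) *\<^sub>R a)"
      by (metis norm_triangle_ineq)
    thus "norm (z i - a) \<le> ?G i" using n1 by simp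
  qed
  have "(\<lambda>i. z i - a) \<longlonglongrightarrow> 0" using Lim_null_comparison[OF evn G0] .
  thus ?thesis using LIM_zero_cancel by blast
qed

lemma Fcont:
  assumes zK: "\<And>i. z i \<in> interior C" and a: "a \<in> interior C" and z: "z \<longlonglongrightarrow> a"
  shows "(\<lambda>i. F (z i)) \<longlonglongrightarrow> F a"
proof -
  obtain \<rho> where r: "\<rho> > 0"
    "\<forall>i. z i - (1 - norm (z i - a)/\<rho>) *\<^sub>R a \<in> C \<and> (1 + norm (z i - a)/\<rho>) *\<^sub>R a - z i \<in> C"
    "(\<lambda>i. norm (z i - a)/\<rho>) \<longlonglongrightarrow> 0" using near[OF a z] by blast
  define \<delta> where "\<delta> i = norm (z i - a)/\<rho>" for i
  have d0: "\<delta> \<longlonglongrightarrow> 0" using r(3) by (simp add: \<delta>_def[abs_def])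
  have dnn: "\<delta> i \<ge> 0" for i using r(1) by (simp add: \<delta>_def)
  have ev: "eventually (\<lambda>i. \<delta> i < 1) sequentially" using order_tendstoD(2)[OF d0] by simp
  have p: "(\<lambda>i. 1 - \<delta> i) \<longlonglongrightarrow> 1" using tendsto_diff[OF tendsto_const d0, of 1] by simp
  have q: "(\<lambda>i. 1 + \<delta> i) \<longlonglongrightarrow> 1" using tendsto_add[OF tendsto_const d0, of 1] by simp
  show ?thesis
  proof (rule squeeze[OF p q])
    show "eventually (\<lambda>i. F (z i) - (1 - \<delta> i) *\<^sub>R F a \<in> C \<and> (1 + \<delta> i) *\<^sub>R F a - F (z i) \<in> C) sequentially"
      using ev
    proof (rule eventually_mono)
      fix i assume di: "\<delta> i < 1"
      have l: "(1 - \<delta> i) *\<^sub>R a \<in> interior C" using Kscale[OF a] di by simp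
      have u: "(1 + \<delta> i) *\<^sub>R a \<in> interior C" using Kscale[OF a] dnn[of i] by simp
      have h1: "z i - (1 - \<delta> i) *\<^sub>R a \<in> C" "(1 + \<delta> i) *\<^sub>R a - z i \<in> C" using r(2) by (auto simp: \<delta>_def)
      have "F (z i) - F ((1 - \<delta> i) *\<^sub>R a) \<in> C" using Fmono[OF l zK h1(1)] .
      moreover have "F ((1 - \<delta> i) *\<^sub>R a) = (1 - \<delta> i) *\<^sub>R F a" using Fhom[OF a] di by simp
      moreover have "F ((1 + \<delta> i) *\<^sub>R a) - F (z i) \<in> C" using Fmono[OF zK u h1(2)] .
      moreover have "F ((1 + \<delta> i) *\<^sub>R a) = (1 + \<delta> i) *\<^sub>R F a" using Fhom[OF a] dnn[of i] by simp
      ultimately show "F (z i) - (1 - \<delta> i) *\<^sub>R F a \<in> C \<and> (1 + \<delta> i) *\<^sub>R F a - F (z i) \<in> C" by simp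
    qed
  qed
qed

lemma Fpow_K: "y \<in> interior C \<Longrightarrow> (F ^^ n) y \<in> interior C"
  by (induction n) (auto intro: Fmap)

lemma Fpow_cont:
  assumes zK: "\<And>i. z i \<in> interior C" and a: "a \<in> interior C" and z: "z \<longlonglongrightarrow> a"
  shows "(\<lambda>i. (F ^^ n) (z i)) \<longlonglongrightarrow> (F ^^ n) a"
proof (induction n)
  case 0 thus ?case using z by simp
next
  case (Suc n)
  have "(\<lambda>i. F ((F ^^ n) (z i))) \<longlonglongrightarrow> F ((F ^^ n) a)"
    using Fcont[OF Fpow_K[OF zK] Fpow_K[OF a] Suc] .
  thus ?case by simp
qed

lemma lo_cont:
  assumes aK: "\<And>i. a i \<in> interior C" and bK: "\<And>i. b i \<in> interior C"
    and A: "A \<in> interior C" and B: "B \<in> interior C" and la: "a \<longlonglongrightarrow> A" and lb: "b \<longlonglongrightarrow> B"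
  shows "(\<lambda>i. lo C (a i) (b i)) \<longlonglongrightarrow> lo C A B"
proof -
  obtain \<rho>1 where r1: "\<rho>1 > 0"
    "\<forall>i. a i - (1 - norm (a i - A)/\<rho>1) *\<^sub>R A \<in> C \<and> (1 + norm (a i - A)/\<rho>1) *\<^sub>R A - a i \<in> C"
    "(\<lambda>i. norm (a i - A)/\<rho>1) \<longlonglongrightarrow> 0" using near[OF A la] by blast
  obtain \<rho>2 where r2: "\<rho>2 > 0"
    "\<forall>i. b i - (1 - norm (b i - B)/\<rho>2) *\<^sub>R B \<in> C \<and> (1 + norm (b i - B)/\<rho>2) *\<^sub>R B - b i \<in> C"
    "(\<lambda>i. norm (b i - B)/\<rho>2) \<longlonglongrightarrow> 0" using near[OF B lb] by blast
  define \<delta> where "\<delta> i = norm (a i - A)/\<rho>1" for i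
  define \<eta> where "\<eta> i = norm (b i - B)/\<rho>2" for i
  define L where "L = lo C A B"
  have Lpos: "L > 0" using lo_pos[OF A B] by (simp add: L_def)
  have d0: "\<delta> \<longlonglongrightarrow> 0" using r1(3) by (simp add: \<delta>_def[abs_def])
  have e0: "\<eta> \<longlonglongrightarrow> 0" using r2(3) by (simp add: \<eta>_def[abs_def])
  have dnn: "\<delta> i \<ge> 0" for i using r1(1) by (simp add: \<delta>_def)
  have enn: "\<eta> i \<ge> 0" for i using r2(1) by (simp add: \<eta>_def)
  have ev: "eventually (\<lambda>i. \<delta> i < 1/2 \<and> \<eta> i < 1/2) sequentially"
    using order_tendstoD(2)[OF d0, of "1/2"] order_tendstoD(2)[OF e0, of "1/2"]
    by (simp add: eventually_conj)
  have lim1: "(\<lambda>i. L * (1 - \<delta> i) / (1 + \<eta> i)) \<longlonglongrightarrow> L * (1 - 0) / (1 + 0)"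
    by (intro tendsto_intros d0 e0) simp
  have lim2: "(\<lambda>i. L * (1 + \<delta> i) / (1 - \<eta> i)) \<longlonglongrightarrow> L * (1 + 0) / (1 - 0)"
    by (intro tendsto_intros d0 e0) simp
  show ?thesis
  proof (rule tendsto_sandwich[OF _ _ lim1[simplified] lim2[simplified], unfolded L_def])
    show "eventually (\<lambda>i. lo C A B * (1 - \<delta> i) / (1 + \<eta> i) \<le> lo C (a i) (b i)) sequentially"
      using ev
    proof (rule eventually_mono)
      fix i assume h: "\<delta> i < 1/2 \<and> \<eta> i < 1/2"
      define l where "l = L * (1 - \<delta> i) / (1 + \<eta> i)"
      have lnn: "l \<ge> 0" using h Lpos enn[of i] by (simp add: l_def)
      have leq: "l * (1 + \<eta> i) = L * (1 - \<delta> i)" using enn[of i] by (simp add: l_def)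
      have c1: "a i - (1 - \<delta> i) *\<^sub>R A \<in> C" using r1(2) by (simp add: \<delta>_def)
      have c2: "(1 - \<delta> i) *\<^sub>R (A - L *\<^sub>R B) \<in> C" using scaleC[OF lo_ge[OF A B]] h by (simp add: L_def)
      have c3: "l *\<^sub>R ((1 + \<eta> i) *\<^sub>R B - b i) \<in> C" using scaleC r2(2) lnn by (simp add: \<eta>_def)
      have "(a i - (1 - \<delta> i) *\<^sub>R A) + (1 - \<delta> i) *\<^sub>R (A - L *\<^sub>R B) + l *\<^sub>R ((1 + \<eta> i) *\<^sub>R B - b i) \<in> C"
        using c1 c2 c3 addC by blast
      moreover have "l *\<^sub>R ((1 + \<eta> i) *\<^sub>R B) = (L * (1 - \<delta> i)) *\<^sub>R B" using leq by simp
      hence "(a i - (1 - \<delta> i) *\<^sub>R A) + (1 - \<delta> i) *\<^sub>R (A - L *\<^sub>R B) + l *\<^sub>R ((1 + \<eta> i) *\<^sub>R B - b i)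
             = a i - l *\<^sub>R b i"
        by (simp add: algebra_simps)
      ultimately have "a i - l *\<^sub>R b i \<in> C" by simp
      hence "l \<le> lo C (a i) (b i)" using lo_le[OF aK bK] by blast
      thus "lo C A B * (1 - \<delta> i) / (1 + \<eta> i) \<le> lo C (a i) (b i)" by (simp add: l_def L_def)
    qed
    show "eventually (\<lambda>i. lo C (a i) (b i) \<le> lo C A B * (1 + \<delta> i) / (1 - \<eta> i)) sequentially"
      using ev
    proof (rule eventually_mono)
      fix i assume h: "\<delta> i < 1/2 \<and> \<eta> i < 1/2"
      define s where "s = lo C (a i) (b i)"
      have spos: "s > 0" using lo_pos[OF aK bK] by (simp add: s_def)
      have c1: "(1 + \<delta> i) *\<^sub>R A - a i \<in> C" using r1(2) by (simp add: \<delta>_def)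
      have c2: "a i - s *\<^sub>R b i \<in> C" using lo_ge[OF aK bK] by (simp add: s_def)
      have c3: "s *\<^sub>R (b i - (1 - \<eta> i) *\<^sub>R B) \<in> C" using scaleC r2(2) spos by (simp add: \<eta>_def)
      have "((1 + \<delta> i) *\<^sub>R A - a i) + (a i - s *\<^sub>R b i) + s *\<^sub>R (b i - (1 - \<eta> i) *\<^sub>R B) \<in> C"
        using c1 c2 c3 addC by blast
      moreover have "((1 + \<delta> i) *\<^sub>R A - a i) + (a i - s *\<^sub>R b i) + s *\<^sub>R (b i - (1 - \<eta> i) *\<^sub>R B)
            = (1 + \<delta> i) *\<^sub>R A - (s * (1 - \<eta> i)) *\<^sub>R B" by (simp add: algebra_simps)
      ultimately have "A - ((s * (1 - \<eta> i)) / (1 + \<delta> i)) *\<^sub>R B \<in> C"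
        using scale_out[of "1 + \<delta> i"] dnn[of i] by (metis add_pos_nonneg zero_less_one)
      hence "(s * (1 - \<eta> i)) / (1 + \<delta> i) \<le> L" using lo_le[OF A B] by (simp add: L_def)
      hence "s * (1 - \<eta> i) \<le> L * (1 + \<delta> i)" using dnn[of i] by (simp add: divide_le_eq)
      hence "s \<le> L * (1 + \<delta> i) / (1 - \<eta> i)" using h by (simp add: le_divide_eq)
      thus "lo C (a i) (b i) \<le> lo C A B * (1 + \<delta> i) / (1 - \<eta> i)" by (simp add: s_def L_def)
    qed
  qed
qed

end
context cone_setting
begin

lemma keyA:
  assumes WK: "\<And>k. W k \<in> interior C" and WS: "\<And>k. W (Suc k) = F (W k)"
    and sh: "\<And>k. lo C (W (Suc k)) (W 1) = lo C (W k) (W 0)"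
  shows "lo C (W (j+2)) (W 0) * lo C (W j) (W 0) \<le> (lo C (W (j+1)) (W 0))^2"
proof -
  define m where "m k = lo C (W k) (W 0)" for k
  have mpos: "m k > 0" for k using lo_pos[OF WK WK] by (simp add: m_def)
  define J where "J = Suc j"
  have p1: "W J - m J *\<^sub>R W 0 \<in> C" using lo_ge[OF WK WK] by (simp add: m_def)
  have inK: "m J *\<^sub>R W 0 \<in> interior C" using Kscale[OF WK mpos] .
  obtain \<epsilon> where e: "\<epsilon> > 0" "F (W J) - F (m J *\<^sub>R W 0) - \<epsilon> *\<^sub>R (W J - m J *\<^sub>R W 0) \<in> C"
    using FK[OF inK WK p1] by blast
  have FW0: "F (m J *\<^sub>R W 0) = m J *\<^sub>R W 1" using Fhom[OF WK mpos] WS[of 0] by simp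
  have e1: "W (Suc J) - m J *\<^sub>R W 1 - \<epsilon> *\<^sub>R (W J - m J *\<^sub>R W 0) \<in> C"
    using e(2) FW0 WS[of J] by simp
  have e2: "W J - m j *\<^sub>R W 1 \<in> C"
    using lo_ge[OF WK WK, of J 1] sh[of j] by (simp add: m_def J_def)
  have e3: "W (Suc J) - m (Suc J) *\<^sub>R W 0 \<in> C" using lo_ge[OF WK WK] by (simp add: m_def)
  have "m (Suc J) *\<^sub>R (W (Suc J) - m J *\<^sub>R W 1 - \<epsilon> *\<^sub>R (W J - m J *\<^sub>R W 0))
        + (m (Suc J) * \<epsilon>) *\<^sub>R (W J - m j *\<^sub>R W 1)
        + (\<epsilon> * m J) *\<^sub>R (W (Suc J) - m (Suc J) *\<^sub>R W 0) \<in> C"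
    using e1 e2 e3 scaleC addC e(1) mpos by (meson less_imp_le mult_pos_pos)
  moreover have "m (Suc J) *\<^sub>R (W (Suc J) - m J *\<^sub>R W 1 - \<epsilon> *\<^sub>R (W J - m J *\<^sub>R W 0))
        + (m (Suc J) * \<epsilon>) *\<^sub>R (W J - m j *\<^sub>R W 1)
        + (\<epsilon> * m J) *\<^sub>R (W (Suc J) - m (Suc J) *\<^sub>R W 0)
        = (m (Suc J) + \<epsilon> * m J) *\<^sub>R W (Suc J) - (m (Suc J) * (m J + \<epsilon> * m j)) *\<^sub>R W 1"
    by (simp add: algebra_simps)
  ultimately have "(m (Suc J) + \<epsilon> * m J) *\<^sub>R W (Suc J) - (m (Suc J) * (m J + \<epsilon> * m j)) *\<^sub>R W 1 \<in> C"
    by simp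
  moreover have P: "m (Suc J) + \<epsilon> * m J > 0" using mpos e(1) by (simp add: add_pos_pos)
  ultimately have "W (Suc J) - ((m (Suc J) * (m J + \<epsilon> * m j)) / (m (Suc J) + \<epsilon> * m J)) *\<^sub>R W 1 \<in> C"
    using scale_out by blast
  hence "(m (Suc J) * (m J + \<epsilon> * m j)) / (m (Suc J) + \<epsilon> * m J) \<le> lo C (W (Suc J)) (W 1)"
    using lo_le[OF WK WK] by blast
  also have "... = m J" using sh[of J] by (simp add: m_def)
  finally have "m (Suc J) * (m J + \<epsilon> * m j) \<le> m J * (m (Suc J) + \<epsilon> * m J)"
    using P by (simp add: divide_le_eq mult.commute)
  hence "\<epsilon> * (m (Suc J) * m j) \<le> \<epsilon> * (m J * m J)" by (simp add: algebra_simps)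
  hence "m (Suc J) * m j \<le> m J * m J" using e(1) by simp
  thus ?thesis by (simp add: m_def J_def power2_eq_square)
qed

lemma keyB:
  assumes WK: "\<And>k. W k \<in> interior C" and WS: "\<And>k. W (Suc k) = F (W k)"
    and sh: "\<And>k. lo C (W 1) (W (Suc k)) = lo C (W 0) (W k)"
  shows "lo C (W 0) (W (j+2)) * lo C (W 0) (W j) \<le> (lo C (W 0) (W (j+1)))^2"
proof -
  define l where "l k = lo C (W 0) (W k)" for k
  have lpos: "l k > 0" for k using lo_pos[OF WK WK] by (simp add: l_def)
  define J where "J = Suc j"
  have p1: "W 0 - l J *\<^sub>R W J \<in> C" using lo_ge[OF WK WK] by (simp add: l_def)
  have inK: "l J *\<^sub>R W J \<in> interior C" using Kscale[OF WK lpos] .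
  obtain \<epsilon> where e: "\<epsilon> > 0" "F (W 0) - F (l J *\<^sub>R W J) - \<epsilon> *\<^sub>R (W 0 - l J *\<^sub>R W J) \<in> C"
    using FK[OF inK WK p1] by blast
  have FWJ: "F (l J *\<^sub>R W J) = l J *\<^sub>R W (Suc J)" using Fhom[OF WK lpos] WS[of J] by simp
  have e1: "W 1 - l J *\<^sub>R W (Suc J) - \<epsilon> *\<^sub>R (W 0 - l J *\<^sub>R W J) \<in> C"
    using e(2) FWJ WS[of 0] by simp
  have e2: "W 1 - l j *\<^sub>R W J \<in> C"
    using lo_ge[OF WK WK, of 1 J] sh[of j] by (simp add: l_def J_def)
  have e3: "W 0 - l (Suc J) *\<^sub>R W (Suc J) \<in> C" using lo_ge[OF WK WK] by (simp add: l_def)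
  have "l j *\<^sub>R (W 1 - l J *\<^sub>R W (Suc J) - \<epsilon> *\<^sub>R (W 0 - l J *\<^sub>R W J))
        + (l j * \<epsilon>) *\<^sub>R (W 0 - l (Suc J) *\<^sub>R W (Suc J))
        + (\<epsilon> * l J) *\<^sub>R (W 1 - l j *\<^sub>R W J) \<in> C"
    using e1 e2 e3 scaleC addC e(1) lpos by (meson less_imp_le mult_pos_pos)
  moreover have "l j *\<^sub>R (W 1 - l J *\<^sub>R W (Suc J) - \<epsilon> *\<^sub>R (W 0 - l J *\<^sub>R W J))
        + (l j * \<epsilon>) *\<^sub>R (W 0 - l (Suc J) *\<^sub>R W (Suc J))
        + (\<epsilon> * l J) *\<^sub>R (W 1 - l j *\<^sub>R W J)
        = (l j + \<epsilon> * l J) *\<^sub>R W 1 - (l j * (l J + \<epsilon> * l (Suc J))) *\<^sub>R W (Suc J)"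
    by (simp add: algebra_simps)
  ultimately have "(l j + \<epsilon> * l J) *\<^sub>R W 1 - (l j * (l J + \<epsilon> * l (Suc J))) *\<^sub>R W (Suc J) \<in> C"
    by simp
  moreover have P: "l j + \<epsilon> * l J > 0" using lpos e(1) by (simp add: add_pos_pos)
  ultimately have "W 1 - ((l j * (l J + \<epsilon> * l (Suc J))) / (l j + \<epsilon> * l J)) *\<^sub>R W (Suc J) \<in> C"
    using scale_out by blast
  hence "(l j * (l J + \<epsilon> * l (Suc J))) / (l j + \<epsilon> * l J) \<le> lo C (W 1) (W (Suc J))"
    using lo_le[OF WK WK] by blast
  also have "... = l J" using sh[of J] by (simp add: l_def)
  finally have "l j * (l J + \<epsilon> * l (Suc J)) \<le> l J * (l j + \<epsilon> * l J)"
    using P by (simp add: divide_le_eq mult.commute)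
  hence "\<epsilon> * (l (Suc J) * l j) \<le> \<epsilon> * (l J * l J)" by (simp add: algebra_simps)
  hence "l (Suc J) * l j \<le> l J * l J" using e(1) by simp
  thus ?thesis by (simp add: l_def J_def power2_eq_square)
qed

end

lemma logconc:
  fixes m :: "nat \<Rightarrow> real"
  assumes pos: "\<And>k. m k > 0" and m0: "m 0 = 1"
    and lc: "\<And>j. m (j+2) * m j \<le> (m (j+1))^2"
    and lb: "\<And>k. c \<le> m k" and c: "c > 0"
  shows "1 \<le> m 1"
proof -
  have step: "m (Suc k) \<le> m 1 * m k" for k
  proof (induction k)
    case 0 show ?case using m0 by simp
  next
    case (Suc k)
    have "m (Suc (Suc k)) * m k \<le> m (Suc k) * m (Suc k)"
      using lc[of k] by (simp add: power2_eq_square)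
    also have "... \<le> (m 1 * m k) * m (Suc k)"
      using Suc pos[of "Suc k"] by (simp add: mult_right_mono)
    finally have "m (Suc (Suc k)) * m k \<le> (m 1 * m (Suc k)) * m k" by (simp add: ac_simps)
    thus ?case using pos[of k] mult_right_le_imp_le by blast
  qed
  have pw: "m k \<le> m 1 ^ k" for k
  proof (induction k)
    case 0 thus ?case using m0 by simp
  next
    case (Suc k)
    have "m (Suc k) \<le> m 1 * m k" using step .
    also have "... \<le> m 1 * m 1 ^ k" using Suc pos[of 1] by (simp add: mult_left_mono)
    finally show ?case by simp
  qed
  show ?thesis
  proof (rule ccontr)
    assume "\<not> 1 \<le> m 1"
    hence "m 1 < 1" by simp
    then obtain n where "m 1 ^ n < c" using real_arch_pow_inv[OF c] by blast
    thus False using pw[of n] lb[of n] by simp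
  qed
qed

lemma mono_subseq:
  fixes t :: "nat \<Rightarrow> real"
  assumes inc: "incseq t" and r: "strict_mono r" and l: "(t \<circ> r) \<longlonglongrightarrow> L"
  shows "t \<longlonglongrightarrow> L"
proof -
  have incr: "incseq (t \<circ> r)" using inc r unfolding incseq_def by (simp add: strict_mono_leD)
  have "t n \<le> L" for n
  proof -
    have "t n \<le> t (r n)" using inc seq_suble[OF r] by (simp add: incseq_def)
    also have "... \<le> L" using incseq_le[OF incr l, of n] by simp
    finally show ?thesis .
  qed
  hence ba: "bdd_above (range t)" by (intro bdd_aboveI) blast
  have t1: "t \<longlonglongrightarrow> Sup (range t)" using LIMSEQ_incseq_SUP[OF ba inc] .
  have "(t \<circ> r) \<longlonglongrightarrow> Sup (range t)" using LIMSEQ_subseq_LIMSEQ[OF t1 r] .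
  hence "Sup (range t) = L" using LIMSEQ_unique l by blast
  thus ?thesis using t1 by simp
qed
locale orbit_setting = cone_setting +
  fixes x :: "'a::banach" and \<alpha>0 \<beta>0 :: real
  assumes xK: "x \<in> interior C" and a0: "\<alpha>0 > 0" and b0: "\<beta>0 > 0"
    and xa: "x - \<alpha>0 *\<^sub>R v \<in> C" and xb: "\<beta>0 *\<^sub>R v - x \<in> C"
begin

definition Box where "Box = {u \<in> interior C. u - \<alpha>0 *\<^sub>R v \<in> C \<and> \<beta>0 *\<^sub>R v - u \<in> C}"

lemma F_box:
  assumes u: "u \<in> Box"
  shows "F u \<in> Box"
proof -
  have uK: "u \<in> interior C" using u by (simp add: Box_def)
  have av: "\<alpha>0 *\<^sub>R v \<in> interior C" using Kscale[OF vK a0] .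
  have bv: "\<beta>0 *\<^sub>R v \<in> interior C" using Kscale[OF vK b0] .
  have "F u - F (\<alpha>0 *\<^sub>R v) \<in> C" using Fmono[OF av uK] u by (simp add: Box_def)
  moreover have "F (\<alpha>0 *\<^sub>R v) = \<alpha>0 *\<^sub>R v" using Fhom[OF vK a0] Fv by simp
  moreover have "F (\<beta>0 *\<^sub>R v) - F u \<in> C" using Fmono[OF uK bv] u by (simp add: Box_def)
  moreover have "F (\<beta>0 *\<^sub>R v) = \<beta>0 *\<^sub>R v" using Fhom[OF vK b0] Fv by simp
  ultimately show ?thesis using Fmap[OF uK] by (simp add: Box_def)
qed

lemma Fpow_box: "u \<in> Box \<Longrightarrow> (F ^^ n) u \<in> Box"
  by (induction n) (auto intro: F_box)

lemma x_box: "x \<in> Box" using xK xa xb by (simp add: Box_def)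

lemma X_box: "(F ^^ n) x \<in> Box" using Fpow_box[OF x_box] .

lemma X_K: "(F ^^ n) x \<in> interior C" using X_box by (simp add: Box_def)

lemma box_upper:
  assumes u: "u \<in> Box" and z: "z \<in> Box"
  shows "lo C u z \<le> \<beta>0 / \<alpha>0"
proof -
  have uK: "u \<in> interior C" and zK: "z \<in> interior C" using u z by (auto simp: Box_def)
  let ?s = "lo C u z"
  have s: "?s > 0" using lo_pos[OF uK zK] .
  have c1: "\<beta>0 *\<^sub>R v - u \<in> C" using u by (simp add: Box_def)
  have c2: "u - ?s *\<^sub>R z \<in> C" using lo_ge[OF uK zK] .
  have c3: "?s *\<^sub>R (z - \<alpha>0 *\<^sub>R v) \<in> C" using scaleC z s by (simp add: Box_def)
  have "(\<beta>0 *\<^sub>R v - u) + (u - ?s *\<^sub>R z) + ?s *\<^sub>R (z - \<alpha>0 *\<^sub>R v) \<in> C"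
    using addC[OF addC[OF c1 c2] c3] .
  moreover have "(\<beta>0 *\<^sub>R v - u) + (u - ?s *\<^sub>R z) + ?s *\<^sub>R (z - \<alpha>0 *\<^sub>R v) = (\<beta>0 - ?s * \<alpha>0) *\<^sub>R v"
    by (simp add: algebra_simps)
  ultimately have "?s * \<alpha>0 \<le> \<beta>0" using scal_le[OF vK] by simp
  thus ?thesis using a0 by (simp add: le_divide_eq)
qed

lemma box_lower:
  assumes u: "u \<in> Box" and z: "z \<in> Box"
  shows "\<alpha>0 / \<beta>0 \<le> lo C u z"
proof -
  have uK: "u \<in> interior C" and zK: "z \<in> interior C" using u z by (auto simp: Box_def)
  have "(u - \<alpha>0 *\<^sub>R v) + (\<alpha>0 / \<beta>0) *\<^sub>R (\<beta>0 *\<^sub>R v - z) \<in> C"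
    using u z scaleC addC a0 b0 by (simp add: Box_def)
  moreover have "(u - \<alpha>0 *\<^sub>R v) + (\<alpha>0 / \<beta>0) *\<^sub>R (\<beta>0 *\<^sub>R v - z) = u - (\<alpha>0 / \<beta>0) *\<^sub>R z"
    using b0 by (simp add: algebra_simps)
  ultimately show ?thesis using lo_le[OF uK zK] by simp
qed

lemma Xadd: "(F ^^ (n + a)) x = (F ^^ a) ((F ^^ n) x)"
  by (subst add.commute) (simp add: funpow_add)

lemma Lim_exists: "\<exists>L. (\<lambda>n. lo C ((F ^^ (n + a)) x) ((F ^^ (n + b)) x)) \<longlonglongrightarrow> L"
proof -
  let ?S = "\<lambda>n. lo C ((F ^^ (n + a)) x) ((F ^^ (n + b)) x)"
  have "incseq ?S"
  proof (rule incseq_SucI)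
    fix n
    have "?S n \<le> lo C (F ((F ^^ (n + a)) x)) (F ((F ^^ (n + b)) x))"
      using lo_mono_F[OF X_K X_K] .
    thus "?S n \<le> ?S (Suc n)" by simp
  qed
  moreover have "bdd_above (range ?S)"
    using box_upper[OF X_box X_box] by (intro bdd_aboveI) blast
  ultimately show ?thesis using LIMSEQ_incseq_SUP by blast
qed

definition Lm where "Lm a b = lim (\<lambda>n. lo C ((F ^^ (n + a)) x) ((F ^^ (n + b)) x))"

lemma Lm_lim: "(\<lambda>n. lo C ((F ^^ (n + a)) x) ((F ^^ (n + b)) x)) \<longlonglongrightarrow> Lm a b"
proof -
  obtain L where L: "(\<lambda>n. lo C ((F ^^ (n + a)) x) ((F ^^ (n + b)) x)) \<longlonglongrightarrow> L"
    using Lim_exists[of a b] by blast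
  show ?thesis unfolding Lm_def using L by (simp add: limI)
qed

lemma Lm_shift: "Lm (Suc a) (Suc b) = Lm a b"
proof -
  have "(\<lambda>n. lo C ((F ^^ (Suc n + a)) x) ((F ^^ (Suc n + b)) x)) \<longlonglongrightarrow> Lm a b"
    using LIMSEQ_Suc[OF Lm_lim[of a b]] by simp
  hence "(\<lambda>n. lo C ((F ^^ (n + Suc a)) x) ((F ^^ (n + Suc b)) x)) \<longlonglongrightarrow> Lm a b" by simp
  thus ?thesis using Lm_lim[of "Suc a" "Suc b"] LIMSEQ_unique by blast
qed

lemma limpt_box:
  assumes lim: "(\<lambda>i. (F ^^ r i) x) \<longlonglongrightarrow> w"
  shows "w \<in> Box"
proof -
  have c1: "(\<lambda>i. (F ^^ r i) x - \<alpha>0 *\<^sub>R v) \<longlonglongrightarrow> w - \<alpha>0 *\<^sub>R v" by (intro tendsto_intros lim)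
  have c2: "(\<lambda>i. \<beta>0 *\<^sub>R v - (F ^^ r i) x) \<longlonglongrightarrow> \<beta>0 *\<^sub>R v - w" by (intro tendsto_intros lim)
  have w1: "w - \<alpha>0 *\<^sub>R v \<in> C"
    using closed_sequentially[OF closedC _ c1] X_box by (simp add: Box_def)
  have w2: "\<beta>0 *\<^sub>R v - w \<in> C"
    using closed_sequentially[OF closedC _ c2] X_box by (simp add: Box_def)
  have "\<alpha>0 *\<^sub>R v + (w - \<alpha>0 *\<^sub>R v) \<in> interior C" using Kadd[OF Kscale[OF vK a0] w1] .
  hence "w \<in> interior C" by simp
  thus ?thesis using w1 w2 by (simp add: Box_def)
qed

lemma lim_lo:
  assumes r: "strict_mono r" and lim: "(\<lambda>i. (F ^^ r i) x) \<longlonglongrightarrow> w"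
  shows "lo C ((F ^^ a) w) ((F ^^ b) w) = Lm a b"
proof -
  have wK: "w \<in> interior C" using limpt_box[OF lim] by (simp add: Box_def)
  have la: "(\<lambda>i. (F ^^ (r i + a)) x) \<longlonglongrightarrow> (F ^^ a) w"
    using Fpow_cont[OF X_K wK lim, of a] by (simp add: Xadd)
  have lb: "(\<lambda>i. (F ^^ (r i + b)) x) \<longlonglongrightarrow> (F ^^ b) w"
    using Fpow_cont[OF X_K wK lim, of b] by (simp add: Xadd)
  have l1: "(\<lambda>i. lo C ((F ^^ (r i + a)) x) ((F ^^ (r i + b)) x)) \<longlonglongrightarrow> lo C ((F ^^ a) w) ((F ^^ b) w)"
    using lo_cont[OF X_K X_K Fpow_K[OF wK] Fpow_K[OF wK] la lb] .
  have l2: "(\<lambda>i. lo C ((F ^^ (r i + a)) x) ((F ^^ (r i + b)) x)) \<longlonglongrightarrow> Lm a b"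
    using LIMSEQ_subseq_LIMSEQ[OF Lm_lim r] by (simp add: comp_def)
  show ?thesis using LIMSEQ_unique[OF l1 l2] .
qed

lemma fixed_limit:
  assumes r: "strict_mono r" and lim: "(\<lambda>i. (F ^^ r i) x) \<longlonglongrightarrow> w"
  shows "F w = w"
proof -
  have wB: "w \<in> Box" using limpt_box[OF lim] .
  define W where "W k = (F ^^ k) w" for k
  have WB: "W k \<in> Box" for k using Fpow_box[OF wB] by (simp add: W_def)
  have WK: "W k \<in> interior C" for k using WB by (simp add: Box_def)
  have WS: "W (Suc k) = F (W k)" for k by (simp add: W_def)
  have LW: "lo C (W a) (W b) = Lm a b" for a b using lim_lo[OF r lim] by (simp add: W_def)
  have shA: "lo C (W (Suc k)) (W 1) = lo C (W k) (W 0)" for k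
    using LW[of "Suc k" "Suc 0"] LW[of k 0] Lm_shift[of k 0] by simp
  have shB: "lo C (W 1) (W (Suc k)) = lo C (W 0) (W k)" for k
    using LW[of "Suc 0" "Suc k"] LW[of 0 k] Lm_shift[of 0 k] by simp
  have cpos: "\<alpha>0 / \<beta>0 > 0" using a0 b0 by simp
  have m1: "1 \<le> lo C (W 1) (W 0)"
    using logconc[of "\<lambda>k. lo C (W k) (W 0)" "\<alpha>0 / \<beta>0", OF lo_pos[OF WK WK] lo_self[OF WK]
      keyA[OF WK WS shA] box_lower[OF WB WB] cpos] by simp
  have l1: "1 \<le> lo C (W 0) (W 1)"
    using logconc[of "\<lambda>k. lo C (W 0) (W k)" "\<alpha>0 / \<beta>0", OF lo_pos[OF WK WK] lo_self[OF WK]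
      keyB[OF WK WS shB] box_lower[OF WB WB] cpos] by simp
  have "(W 1 - lo C (W 1) (W 0) *\<^sub>R W 0) + (lo C (W 1) (W 0) - 1) *\<^sub>R W 0 \<in> C"
    using lo_ge[OF WK WK] scaleC[OF KC[OF WK]] m1 addC by simp
  hence d1: "W 1 - W 0 \<in> C" by (simp add: algebra_simps)
  have "(W 0 - lo C (W 0) (W 1) *\<^sub>R W 1) + (lo C (W 0) (W 1) - 1) *\<^sub>R W 1 \<in> C"
    using lo_ge[OF WK WK] scaleC[OF KC[OF WK]] l1 addC by simp
  hence d2: "W 0 - W 1 \<in> C" by (simp add: algebra_simps)
  have "W 1 - W 0 = 0" using pointed[OF d1] d2 by simp
  thus ?thesis by (simp add: W_def)
qed

lemma conv_fixed:
  assumes r: "strict_mono r" and lim: "(\<lambda>i. (F ^^ r i) x) \<longlonglongrightarrow> w" and Fw: "F w = w"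
  shows "(\<lambda>n. (F ^^ n) x) \<longlonglongrightarrow> w"
proof -
  have wK: "w \<in> interior C" using limpt_box[OF lim] by (simp add: Box_def)
  define t where "t n = lo C ((F ^^ n) x) w" for n
  define u where "u n = lo C w ((F ^^ n) x)" for n
  have it: "incseq t"
  proof (rule incseq_SucI)
    fix n show "t n \<le> t (Suc n)" using lo_mono_F[OF X_K wK, of n] Fw by (simp add: t_def)
  qed
  have iu: "incseq u"
  proof (rule incseq_SucI)
    fix n show "u n \<le> u (Suc n)" using lo_mono_F[OF wK X_K, of n] Fw by (simp add: u_def)
  qed
  have "(\<lambda>i. lo C ((F ^^ r i) x) w) \<longlonglongrightarrow> lo C w w"
    using lo_cont[OF X_K wK wK wK lim tendsto_const] .
  hence "(t \<circ> r) \<longlonglongrightarrow> 1" using lo_self[OF wK] by (simp add: t_def comp_def)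
  hence t1: "t \<longlonglongrightarrow> 1" using mono_subseq[OF it r] by blast
  have "(\<lambda>i. lo C w ((F ^^ r i) x)) \<longlonglongrightarrow> lo C w w"
    using lo_cont[OF wK X_K wK wK tendsto_const lim] .
  hence "(u \<circ> r) \<longlonglongrightarrow> 1" using lo_self[OF wK] by (simp add: u_def comp_def)
  hence u1: "u \<longlonglongrightarrow> 1" using mono_subseq[OF iu r] by blast
  have q: "(\<lambda>n. 1 / u n) \<longlonglongrightarrow> 1" using tendsto_divide[OF tendsto_const u1, of 1] by simp
  show ?thesis
  proof (rule squeeze[OF t1 q])
    show "eventually (\<lambda>n. (F ^^ n) x - t n *\<^sub>R w \<in> C \<and> (1 / u n) *\<^sub>R w - (F ^^ n) x \<in> C) sequentially"
    proof (rule always_eventually, rule allI)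
      fix n
      have h1: "(F ^^ n) x - t n *\<^sub>R w \<in> C" using lo_ge[OF X_K wK] by (simp add: t_def)
      have up: "u n > 0" using lo_pos[OF wK X_K] by (simp add: u_def)
      have "w - u n *\<^sub>R (F ^^ n) x \<in> C" using lo_ge[OF wK X_K] by (simp add: u_def)
      hence "(1 / u n) *\<^sub>R (w - u n *\<^sub>R (F ^^ n) x) \<in> C" using scaleC up by simp
      moreover have "(1 / u n) *\<^sub>R (w - u n *\<^sub>R (F ^^ n) x) = (1 / u n) *\<^sub>R w - (F ^^ n) x"
        using up by (simp add: scaleR_right_diff_distrib)
      ultimately show "(F ^^ n) x - t n *\<^sub>R w \<in> C \<and> (1 / u n) *\<^sub>R w - (F ^^ n) x \<in> C" using h1 by simp
    qed
  qed
qed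

lemma orbit_main:
  assumes S: "compact S" and inS: "\<And>n. (1 / norm ((F ^^ n) x)) *\<^sub>R (F ^^ n) x \<in> S"
  shows "\<exists>w \<in> interior C. F w = w \<and> (\<lambda>n. (F ^^ n) x) \<longlonglongrightarrow> w"
proof -
  define a1 where "a1 = norm (\<alpha>0 *\<^sub>R v) / \<kappa>"
  define b1 where "b1 = \<kappa> * norm (\<beta>0 *\<^sub>R v)"
  have nb: "norm ((F ^^ n) x) \<le> b1" for n
  proof -
    have h: "\<beta>0 *\<^sub>R v - (F ^^ n) x \<in> C" using X_box[of n] by (simp add: Box_def)
    show ?thesis unfolding b1_def by (rule normal[OF KC[OF X_K] h])
  qed
  have na: "a1 \<le> norm ((F ^^ n) x)" for n
  proof -
    have "norm (\<alpha>0 *\<^sub>R v) \<le> \<kappa> * norm ((F ^^ n) x)"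
      using normal[OF KC[OF Kscale[OF vK a0]]] X_box by (simp add: Box_def)
    thus ?thesis using kpos by (simp add: a1_def divide_le_eq mult.commute)
  qed
  define T where "T = (\<lambda>p. fst p *\<^sub>R snd p) ` ({a1..b1} \<times> S)"
  have cT: "compact T" unfolding T_def
    by (intro compact_continuous_image compact_Times compact_Icc S continuous_intros)
  have inT: "(F ^^ n) x \<in> T" for n
  proof -
    have nz: "(F ^^ n) x \<noteq> 0" using Knz[OF X_K] .
    have "(norm ((F ^^ n) x), (1 / norm ((F ^^ n) x)) *\<^sub>R (F ^^ n) x) \<in> {a1..b1} \<times> S"
      using na nb inS by simp
    moreover have "(F ^^ n) x = fst (norm ((F ^^ n) x), (1 / norm ((F ^^ n) x)) *\<^sub>R (F ^^ n) x) *\<^sub>R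
                    snd (norm ((F ^^ n) x), (1 / norm ((F ^^ n) x)) *\<^sub>R (F ^^ n) x)"
      using nz by simp
    ultimately show ?thesis unfolding T_def by blast
  qed
  have sc: "seq_compact T" using compact_imp_seq_compact[OF cT] .
  have aT: "\<And>n. (\<lambda>n. (F ^^ n) x) n \<in> T" using inT by simp
  have "\<exists>l\<in>T. \<exists>r. strict_mono r \<and> ((\<lambda>n. (F ^^ n) x) \<circ> r) \<longlonglongrightarrow> l"
    using sc[unfolded seq_compact_def, rule_format, OF aT] .
  then obtain w r where wr: "w \<in> T" "strict_mono r" "((\<lambda>n. (F ^^ n) x) \<circ> r) \<longlonglongrightarrow> w"
    by blast
  have lim: "(\<lambda>i. (F ^^ r i) x) \<longlonglongrightarrow> w" using wr(3) by (simp add: comp_def)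
  have "F w = w" using fixed_limit[OF wr(2) lim] .
  moreover have "w \<in> interior C" using limpt_box[OF lim] by (simp add: Box_def)
  moreover have "(\<lambda>n. (F ^^ n) x) \<longlonglongrightarrow> w" using conv_fixed[OF wr(2) lim \<open>F w = w\<close>] .
  ultimately show ?thesis by blast
qed

end
theorem mainTheorem5:
  fixes C :: "'a::banach set" and f :: "'a \<Rightarrow> 'a" and g :: "'a \<Rightarrow> 'a"
  assumes "closed_cone C"
    and "normal_cone C"
    and "interior C \<noteq> {}"
    and "f ` interior C \<subseteq> interior C"
    and "typeK_order_preserving_on C (interior C) f"
    and "homogeneous_on (interior C) f"
    and "\<And>x. x \<in> interior C \<Longrightarrow> g x = (1 / norm (f x)) *\<^sub>R f x"
    and "\<exists>v. eigenvector_on (interior C) f v"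
  shows "\<forall>x\<in>interior C. compact (closure {(g ^^ k) x | k::nat. True}) \<longrightarrow>
           (\<exists>v. eigenvector_on (interior C) f v \<and> (\<lambda>k. (g ^^ k) x) \<longlonglongrightarrow> v)"
proof (intro ballI impI)
  fix x assume xK: "x \<in> interior C" and cpt: "compact (closure {(g ^^ k) x | k::nat. True})"
  note cc = assms(1)
  obtain \<kappa> where kp: "\<kappa> > 0" and nrm: "\<forall>x y. cone_le C 0 x \<and> cone_le C x y \<longrightarrow> norm x \<le> \<kappa> * norm y"
    using assms(2) unfolding normal_cone_def by blast
  obtain v c where vK: "v \<in> interior C" and vnz: "v \<noteq> 0" and fv: "f v = c *\<^sub>R v"
    using assms(8) unfolding eigenvector_on_def by blast
  have z: "0 \<notin> interior C" using cc_zero_notin[OF cc vnz] .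
  have fvK: "f v \<in> interior C" using assms(4) vK by blast
  have cpos: "c > 0"
  proof (rule ccontr)
    assume nc: "\<not> c > 0"
    have vC: "v \<in> C" using vK interior_subset by blast
    have "c *\<^sub>R v \<in> C" using fv fvK interior_subset by auto
    moreover have "(-c) *\<^sub>R v \<in> C" using cc_scale[OF cc vC, of "-c"] nc by simp
    hence "-(c *\<^sub>R v) \<in> C" by simp
    ultimately have "c *\<^sub>R v = 0" using cc_pointed[OF cc] by blast
    hence "f v = 0" using fv by simp
    thus False using fvK z by simp
  qed
  define F where "F y = (1/c) *\<^sub>R f y" for y
  have fF: "f y = c *\<^sub>R F y" for y using cpos by (simp add: F_def)
  have homf: "\<And>y t. y \<in> interior C \<Longrightarrow> t > 0 \<Longrightarrow> f (t *\<^sub>R y) = t *\<^sub>R f y"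
    using assms(6) cc_int_scale[OF cc] unfolding homogeneous_on_def by blast
  have cs: "cone_setting C F \<kappa> v"
  proof (rule cone_setting.intro)
    show "closed_cone C" by (rule cc)
    show "\<kappa> > 0" by (rule kp)
    show "\<And>x y. x \<in> C \<Longrightarrow> y - x \<in> C \<Longrightarrow> norm x \<le> \<kappa> * norm y" using nrm by (simp add: cone_le_def)
    show "\<And>x. x \<in> interior C \<Longrightarrow> F x \<in> interior C"
      using assms(4) cc_int_scale[OF cc] cpos by (auto simp: F_def)
    show "\<exists>\<epsilon>>0. F y - F x - \<epsilon> *\<^sub>R (y - x) \<in> C"
      if h: "x \<in> interior C" "y \<in> interior C" "y - x \<in> C" for x y
    proof -
      obtain \<epsilon> where e: "\<epsilon> > 0" "(f y - f x) - \<epsilon> *\<^sub>R (y - x) \<in> C"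
        using assms(5) h unfolding typeK_order_preserving_on_def cone_le_def by blast
      have "(1/c) *\<^sub>R ((f y - f x) - \<epsilon> *\<^sub>R (y - x)) \<in> C" using cc_scale[OF cc e(2)] cpos by simp
      moreover have "(1/c) *\<^sub>R ((f y - f x) - \<epsilon> *\<^sub>R (y - x)) = F y - F x - (\<epsilon>/c) *\<^sub>R (y - x)"
        by (simp add: F_def algebra_simps)
      ultimately show ?thesis using e(1) cpos by (metis divide_pos_pos)
    qed
    show "F (t *\<^sub>R x) = t *\<^sub>R F x" if "x \<in> interior C" "t > 0" for x t
      using homf[OF that] by (simp add: F_def)
    show "v \<in> interior C" by (rule vK)
    show "v \<noteq> 0" by (rule vnz)
    show "F v = v" using fv cpos by (simp add: F_def)
  qed
  obtain \<alpha>0 where a0: "\<alpha>0 > 0" "x - \<alpha>0 *\<^sub>R v \<in> C"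
    using cone_setting.lower_exists[OF cs xK vK] by blast
  obtain s0 where s0: "s0 > 0" "v - s0 *\<^sub>R x \<in> C"
    using cone_setting.lower_exists[OF cs vK xK] by blast
  have xb: "(1/s0) *\<^sub>R v - x \<in> C"
  proof -
    have "(1/s0) *\<^sub>R (v - s0 *\<^sub>R x) \<in> C" using cc_scale[OF cc s0(2)] s0(1) by simp
    thus ?thesis using s0(1) by (simp add: scaleR_right_diff_distrib)
  qed
  have os: "orbit_setting C F \<kappa> v x \<alpha>0 (1/s0)"
    using cs xK a0 s0 xb by (simp add: orbit_setting_def orbit_setting_axioms_def)
  have Xk: "(F ^^ n) x \<in> interior C" for n using orbit_setting.X_K[OF os] .
  have gstep: "g (s *\<^sub>R (F ^^ n) x) = (1 / norm ((F ^^ Suc n) x)) *\<^sub>R (F ^^ Suc n) x"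
    if s: "s > 0" for s n
  proof -
    have yK: "s *\<^sub>R (F ^^ n) x \<in> interior C" using cc_int_scale[OF cc Xk s] .
    have fy: "f (s *\<^sub>R (F ^^ n) x) = (s * c) *\<^sub>R (F ^^ Suc n) x"
      using homf[OF Xk s] fF[of "(F ^^ n) x"] by simp
    have nz: "(F ^^ Suc n) x \<noteq> 0" using Xk[of "Suc n"] z by auto
    have "g (s *\<^sub>R (F ^^ n) x)
        = (1 / norm ((s * c) *\<^sub>R (F ^^ Suc n) x)) *\<^sub>R ((s * c) *\<^sub>R (F ^^ Suc n) x)"
      using assms(7)[OF yK] fy by simp
    also have "... = ((1 / norm ((s * c) *\<^sub>R (F ^^ Suc n) x)) * (s * c)) *\<^sub>R (F ^^ Suc n) x"
      by simp
    also have "(1 / norm ((s * c) *\<^sub>R (F ^^ Suc n) x)) * (s * c) = 1 / norm ((F ^^ Suc n) x)"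
      using s cpos nz by (simp add: field_simps)
    finally show ?thesis .
  qed
  have Q: "\<exists>s>0. (g ^^ n) x = s *\<^sub>R (F ^^ n) x" for n
  proof (induction n)
    case 0 thus ?case by (intro exI[of _ 1]) simp
  next
    case (Suc n)
    then obtain s where s: "s > 0" "(g ^^ n) x = s *\<^sub>R (F ^^ n) x" by blast
    have "(g ^^ Suc n) x = (1 / norm ((F ^^ Suc n) x)) *\<^sub>R (F ^^ Suc n) x"
      using gstep[OF s(1)] s(2) by simp
    moreover have "(F ^^ Suc n) x \<noteq> 0" using Xk[of "Suc n"] z by auto
    hence "1 / norm ((F ^^ Suc n) x) > 0" by simp
    ultimately show ?case by blast
  qed
  have R: "(g ^^ Suc n) x = (1 / norm ((F ^^ Suc n) x)) *\<^sub>R (F ^^ Suc n) x" for n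
  proof -
    obtain s where s: "s > 0" "(g ^^ n) x = s *\<^sub>R (F ^^ n) x" using Q by blast
    show ?thesis using gstep[OF s(1)] s(2) by simp
  qed
  define S where "S = insert ((1 / norm x) *\<^sub>R x) (closure {(g ^^ k) x | k::nat. True})"
  have cS: "compact S" using cpt by (simp add: S_def)
  have inS: "(1 / norm ((F ^^ n) x)) *\<^sub>R (F ^^ n) x \<in> S" for n
  proof (cases n)
    case 0 thus ?thesis by (simp add: S_def)
  next
    case (Suc m)
    have h: "(g ^^ Suc m) x \<in> {(g ^^ k) x | k::nat. True}" by blast
    have "(g ^^ Suc m) x \<in> closure {(g ^^ k) x | k::nat. True}"
      by (rule subsetD[OF closure_subset h])
    hence "(g ^^ Suc m) x \<in> S" unfolding S_def by blast
    thus ?thesis using R[of m] Suc by simp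
  qed
  obtain w where w: "w \<in> interior C" "F w = w" "(\<lambda>n. (F ^^ n) x) \<longlonglongrightarrow> w"
    using orbit_setting.orbit_main[OF os cS inS] by blast
  have wnz: "w \<noteq> 0" using w(1) z by auto
  define v' where "v' = (1 / norm w) *\<^sub>R w"
  have v'K: "v' \<in> interior C" using cc_int_scale[OF cc w(1)] wnz by (simp add: v'_def)
  have v'nz: "v' \<noteq> 0" using wnz by (simp add: v'_def)
  have "f v' = (1 / norm w) *\<^sub>R f w" using homf[OF w(1)] wnz by (simp add: v'_def)
  also have "... = c *\<^sub>R v'" using fF[of w] w(2) by (simp add: v'_def)
  finally have ev: "eigenvector_on (interior C) f v'"
    using v'K v'nz by (auto simp: eigenvector_on_def)
  have "(\<lambda>n. (F ^^ Suc n) x) \<longlonglongrightarrow> w" using LIMSEQ_Suc[OF w(3)] .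
  hence "(\<lambda>n. (1 / norm ((F ^^ Suc n) x)) *\<^sub>R (F ^^ Suc n) x) \<longlonglongrightarrow> (1 / norm w) *\<^sub>R w"
    using wnz by (intro tendsto_intros) auto
  hence "(\<lambda>n. (g ^^ Suc n) x) \<longlonglongrightarrow> v'" using R by (simp add: v'_def)
  hence "(\<lambda>k. (g ^^ k) x) \<longlonglongrightarrow> v'" by (rule LIMSEQ_imp_Suc)
  thus "\<exists>v. eigenvector_on (interior C) f v \<and> (\<lambda>k. (g ^^ k) x) \<longlonglongrightarrow> v" using ev by blast
qed

end
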